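(* Let $\mathfrak{g}$ be a finite-dimensional real pre-Lie algebra and let $\phi\in\Omega^1(\mathfrak{g};\mathfrak{g})$ be the solution of the equations $(\mathrm{MC}_\phi)_x(x,y)=0$ and $\phi_x(x)=x$ for all $x,y\in\mathfrak{g}$ (namely $\phi_x(y)=\int_0^1 e^{-t\,\mathrm{ad}_x}y\,dt$). Then $\mathrm{MC}_\phi=0$ if and only if $\mathrm{Jac}=0$. More precisely, for all $x,y,z\in\mathfrak{g}$, \[ \mathrm{Jac}(x,y,z)=-3\,\frac{d}{dt}(\mathrm{MC}_\phi)_{tx}(y,z)\Big|_{t=0}, \] \[ (\mathrm{MC}_\phi)_x(y,z)=-\int_0^1 e^{(t-1)\mathrm{ad}_x}\,\mathrm{Jac}\big(x,\phi_{tx}(ty),\phi_{tx}(tz)\big)\,dt . \]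
   Context: A pre-Lie algebra is a vector space $\mathfrak{g}$ with an antisymmetric bilinear map $[\cdot,\cdot]$; $\mathrm{ad}_x(y)=[x,y]$; its Jacobiator is $\mathrm{Jac}(x,y,z)=[[x,y],z]+[[y,z],x]+[[z,x],y]$. Tangent spaces of $\mathfrak{g}$ are identified with $\mathfrak{g}$. On $\mathfrak{g}$-valued forms $\Omega^*(\mathfrak{g};\mathfrak{g})$ one has the de Rham differential $d$ and the bracket $[\omega,\eta](X_1,\dots,X_{p+q})=\sum_{\sigma\in S_{p,q}}\mathrm{sgn}(\sigma)[\omega(X_{\sigma(1)},\dots),\eta(X_{\sigma(p+1)},\dots)]$ ($S_{p,q}$ the $(p,q)$-shuffles). The Maurer–Cartan 2-form of $\phi\in\Omega^1(\mathfrak{g};\mathfrak{g})$ is $\mathrm{MC}_\phi=d\phi+\tfrac12[\phi,\phi]$. *)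

theory Defs
  imports "HOL-Analysis.Analysis"
begin

definition op_exp :: "('a::euclidean_space \<Rightarrow> 'a) \<Rightarrow> 'a \<Rightarrow> 'a" where
  "op_exp A y = (\<Sum>k. (1 / fact k) *\<^sub>R (A ^^ k) y)"

definition ad :: "('a \<Rightarrow> 'a \<Rightarrow> 'a) \<Rightarrow> 'a \<Rightarrow> 'a \<Rightarrow> 'a" where
  "ad br x = (\<lambda>y. br x y)"

definition Jac :: "('a::real_vector \<Rightarrow> 'a \<Rightarrow> 'a) \<Rightarrow> 'a \<Rightarrow> 'a \<Rightarrow> 'a \<Rightarrow> 'a" where
  "Jac br x y z = br (br x y) z + br (br y z) x + br (br z x) y"

definition phi :: "('a::euclidean_space \<Rightarrow> 'a \<Rightarrow> 'a) \<Rightarrow> 'a \<Rightarrow> 'a \<Rightarrow> 'a" where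
  "phi br x y = integral {0..1} (\<lambda>t::real. op_exp (\<lambda>v. - (t *\<^sub>R ad br x v)) y)"

text \<open>de Rham differential of a g-valued 1-form omega on g (constant vector fields):
  (d omega)_x(y,z) = D_y(omega(z))(x) - D_z(omega(y))(x).\<close>
definition dR1 :: "('a::euclidean_space \<Rightarrow> 'a \<Rightarrow> 'a) \<Rightarrow> 'a \<Rightarrow> 'a \<Rightarrow> 'a \<Rightarrow> 'a" where
  "dR1 \<omega> x y z = frechet_derivative (\<lambda>x'. \<omega> x' z) (at x) y
                 - frechet_derivative (\<lambda>x'. \<omega> x' y) (at x) z"

text \<open>Bracket of two g-valued 1-forms: sum over (1,1)-shuffles.\<close>
definition brk11 :: "('a \<Rightarrow> 'a \<Rightarrow> 'a) \<Rightarrow> ('a \<Rightarrow> 'a \<Rightarrow> 'a) \<Rightarrow> ('a \<Rightarrow> 'a \<Rightarrow> 'a)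
    \<Rightarrow> 'a \<Rightarrow> 'a \<Rightarrow> 'a \<Rightarrow> 'a::real_vector" where
  "brk11 br \<omega> \<eta> x y z = br (\<omega> x y) (\<eta> x z) - br (\<omega> x z) (\<eta> x y)"

definition MC :: "('a::euclidean_space \<Rightarrow> 'a \<Rightarrow> 'a) \<Rightarrow> ('a \<Rightarrow> 'a \<Rightarrow> 'a) \<Rightarrow> 'a \<Rightarrow> 'a \<Rightarrow> 'a \<Rightarrow> 'a" where
  "MC br \<omega> x y z = dR1 \<omega> x y z + (1/2) *\<^sub>R brk11 br \<omega> \<omega> x y z"

end

theory Submission
  imports Defs
begin

typedef (overloaded) 'a endo = "UNIV :: ('a::euclidean_space \<Rightarrow>\<^sub>L 'a) set"
  morphisms eb Endo by auto

setup_lifting type_definition_endo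

instantiation endo :: (euclidean_space) real_normed_algebra_1
begin
lift_definition zero_endo :: "'a endo" is 0 .
lift_definition one_endo :: "'a endo" is id_blinfun .
lift_definition plus_endo :: "'a endo \<Rightarrow> 'a endo \<Rightarrow> 'a endo" is "(+)" .
lift_definition minus_endo :: "'a endo \<Rightarrow> 'a endo \<Rightarrow> 'a endo" is "(-)" .
lift_definition uminus_endo :: "'a endo \<Rightarrow> 'a endo" is uminus .
lift_definition times_endo :: "'a endo \<Rightarrow> 'a endo \<Rightarrow> 'a endo" is "(o\<^sub>L)" .
lift_definition scaleR_endo :: "real \<Rightarrow> 'a endo \<Rightarrow> 'a endo" is "scaleR" .
lift_definition norm_endo :: "'a endo \<Rightarrow> real" is norm .
definition dist_endo :: "'a endo \<Rightarrow> 'a endo \<Rightarrow> real" where "dist_endo a b = norm (a - b)"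
definition sgn_endo :: "'a endo \<Rightarrow> 'a endo" where "sgn_endo x = scaleR (inverse (norm x)) x"
definition uniformity_endo :: "('a endo \<times> 'a endo) filter" where
  "uniformity_endo = (INF e\<in>{0 <..}. principal {(x, y). dist x y < e})"
definition open_endo :: "'a endo set \<Rightarrow> bool" where
  "open_endo S = (\<forall>x\<in>S. \<forall>\<^sub>F (x', y) in uniformity. x' = x \<longrightarrow> y \<in> S)"
lemma norm_one_endo: "norm (1::'a endo) = 1" by transfer simp
instance
  apply intro_classes
  unfolding dist_endo_def open_endo_def sgn_endo_def uniformity_endo_def
  subgoal by (transfer, auto simp: algebra_simps norm_triangle_ineq norm_blinfun_compose blinfun.bilinear_simps intro!: blinfun_eqI)
  subgoal by (transfer, auto simp: algebra_simps norm_triangle_ineq norm_blinfun_compose blinfun.bilinear_simps intro!: blinfun_eqI)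
  subgoal by (transfer, auto simp: algebra_simps norm_triangle_ineq norm_blinfun_compose blinfun.bilinear_simps intro!: blinfun_eqI)
  subgoal by (transfer, auto simp: algebra_simps norm_triangle_ineq norm_blinfun_compose blinfun.bilinear_simps intro!: blinfun_eqI)
  subgoal by (transfer, auto simp: algebra_simps norm_triangle_ineq norm_blinfun_compose blinfun.bilinear_simps intro!: blinfun_eqI)
  subgoal by (transfer, auto simp: algebra_simps norm_triangle_ineq norm_blinfun_compose blinfun.bilinear_simps intro!: blinfun_eqI)
  subgoal by (transfer, auto simp: algebra_simps norm_triangle_ineq norm_blinfun_compose blinfun.bilinear_simps intro!: blinfun_eqI)
  subgoal by (transfer, auto simp: algebra_simps norm_triangle_ineq norm_blinfun_compose blinfun.bilinear_simps intro!: blinfun_eqI)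
  subgoal by (transfer, auto simp: algebra_simps norm_triangle_ineq norm_blinfun_compose blinfun.bilinear_simps intro!: blinfun_eqI)
  subgoal by (transfer, auto simp: algebra_simps norm_triangle_ineq norm_blinfun_compose blinfun.bilinear_simps intro!: blinfun_eqI)
  subgoal by (transfer, auto simp: algebra_simps norm_triangle_ineq norm_blinfun_compose blinfun.bilinear_simps intro!: blinfun_eqI)
  subgoal by (transfer, auto simp: algebra_simps norm_triangle_ineq norm_blinfun_compose blinfun.bilinear_simps intro!: blinfun_eqI)
  subgoal by (transfer, auto simp: algebra_simps norm_triangle_ineq norm_blinfun_compose blinfun.bilinear_simps intro!: blinfun_eqI)
  subgoal by (transfer, auto simp: algebra_simps norm_triangle_ineq norm_blinfun_compose blinfun.bilinear_simps intro!: blinfun_eqI)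
  subgoal by (transfer, auto simp: algebra_simps norm_triangle_ineq norm_blinfun_compose blinfun.bilinear_simps intro!: blinfun_eqI)
  subgoal by (transfer, auto simp: algebra_simps norm_triangle_ineq norm_blinfun_compose blinfun.bilinear_simps intro!: blinfun_eqI)
  subgoal by (metis norm_one_endo zero_endo.rep_eq norm_endo.rep_eq norm_zero zero_neq_one)
  subgoal by (rule refl)
  subgoal by (rule refl)
  subgoal by (rule refl)
  subgoal by (rule refl)
  subgoal by (transfer, auto simp: onorm_triangle onorm_scaleR algebra_simps norm_triangle_ineq norm_blinfun_compose blinfun.bilinear_simps intro!: blinfun_eqI)
  subgoal by (transfer, auto simp: onorm_triangle onorm_scaleR algebra_simps norm_triangle_ineq norm_blinfun_compose blinfun.bilinear_simps intro!: blinfun_eqI)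
  subgoal by (transfer, auto simp: onorm_triangle onorm_scaleR algebra_simps norm_triangle_ineq norm_blinfun_compose blinfun.bilinear_simps intro!: blinfun_eqI)
  subgoal by (transfer, auto simp: onorm_triangle onorm_scaleR algebra_simps norm_triangle_ineq norm_blinfun_compose blinfun.bilinear_simps intro!: blinfun_eqI)
  subgoal by (rule norm_one_endo)
  done
end

lemma dist_endo_eb: "dist a b = dist (eb a) (eb b)"
  by (simp add: dist_endo_def dist_norm norm_endo.rep_eq minus_endo.rep_eq)

instance endo :: (euclidean_space) banach
proof
  fix X :: "nat \<Rightarrow> 'a endo" assume "Cauchy X"
  then have "Cauchy (\<lambda>n. eb (X n))" by (simp add: Cauchy_def dist_endo_eb)
  then obtain L where "(\<lambda>n. eb (X n)) \<longlonglongrightarrow> L" using convergent_eq_Cauchy by blast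
  then have "X \<longlonglongrightarrow> Endo L"
    by (simp add: lim_sequentially dist_endo_eb Endo_inverse)
  then show "convergent X" by (auto simp: convergent_def)
qed


definition app :: "'a::euclidean_space endo \<Rightarrow> 'a \<Rightarrow> 'a" where
  "app A v = blinfun_apply (eb A) v"

lemma app_norm: "norm (app A v) \<le> norm A * norm v"
  by (simp add: app_def norm_endo.rep_eq norm_blinfun)

lemma bounded_bilinear_app: "bounded_bilinear app"
proof
  show "\<exists>K. \<forall>a b. norm (app a b) \<le> norm a * norm b * K"
    by (rule exI[of _ 1]) (simp add: app_norm)
qed (simp_all add: app_def plus_endo.rep_eq scaleR_endo.rep_eq blinfun.bilinear_simps)

interpretation app: bounded_bilinear app by (rule bounded_bilinear_app)

lemma app_mult[simp]: "app (A * B) v = app A (app B v)"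
  by (simp add: app_def times_endo.rep_eq)
lemma app_one[simp]: "app 1 v = v"
  by (simp add: app_def one_endo.rep_eq)
lemma app_power: "app (A ^ k) v = (app A ^^ k) v"
  by (induction k) auto



locale prelie =
  fixes br :: "'a::euclidean_space \<Rightarrow> 'a \<Rightarrow> 'a"
  assumes bil: "bilinear br"
    and antisym: "\<And>x y. br x y = - br y x"
begin

lemma bb: "bounded_bilinear br"
  using bil bilinear_conv_bounded_bilinear by blast

sublocale br: bounded_bilinear br by (rule bb)

definition Lop :: "'a \<Rightarrow> 'a endo" where
  "Lop x = Endo (Blinfun (br x))"

lemma app_Lop[simp]: "app (Lop x) v = br x v"
  unfolding Lop_def app_def
  by (simp add: Endo_inverse bounded_linear_Blinfun_apply br.bounded_linear_right)

lemma Lop_eqI: "(\<And>v. app A v = app B v) \<Longrightarrow> A = B"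
  unfolding app_def by (metis blinfun_eqI eb_inject)

lemma Lop_add: "Lop (x + y) = Lop x + Lop y"
  by (rule Lop_eqI) (simp add: app.add_left br.add_left)
lemma Lop_scale: "Lop (c *\<^sub>R x) = c *\<^sub>R Lop x"
  by (rule Lop_eqI) (simp add: app.scaleR_left br.scaleR_left)
lemma Lop_diff: "Lop (x - y) = Lop x - Lop y"
  by (rule Lop_eqI) (simp add: app.diff_left br.diff_left)
lemma Lop_zero: "Lop 0 = 0"
  by (rule Lop_eqI) (simp add: br.zero_left app.zero_left)

lemma br_bound: "\<exists>K>0. \<forall>a b. norm (br a b) \<le> norm a * norm b * K"
  using br.pos_bounded by blast

definition K where "K = (SOME K. K > 0 \<and> (\<forall>a b. norm (br a b) \<le> norm a * norm b * K))"

lemma K: "K > 0" "norm (br a b) \<le> norm a * norm b * K"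
proof -
  have "\<exists>K. K > 0 \<and> (\<forall>a b. norm (br a b) \<le> norm a * norm b * K)" using br_bound by blast
  from someI_ex[OF this] show "K > 0" "norm (br a b) \<le> norm a * norm b * K"
    unfolding K_def by auto
qed

lemma norm_Lop: "norm (Lop x) \<le> K * norm x"
proof -
  have "norm (eb (Lop x)) \<le> K * norm x"
  proof (rule norm_blinfun_bound)
    show "0 \<le> K * norm x" using K by simp
    fix v show "norm (blinfun_apply (eb (Lop x)) v) \<le> K * norm x * norm v"
      using K(2)[of x v] by (metis app_Lop app_def mult.commute mult.left_commute)
  qed
  then show ?thesis by (simp add: norm_endo.rep_eq)
qed

lemma op_exp_eq: "op_exp (\<lambda>v. c *\<^sub>R ad br x v) y = app (exp (c *\<^sub>R Lop x)) y"
proof -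
  have fneq: "(\<lambda>v. c *\<^sub>R ad br x v) = app (c *\<^sub>R Lop x)"
    by (auto simp: ad_def app.scaleR_left)
  have "app (exp (c *\<^sub>R Lop x)) y = (\<Sum>n. app ((c *\<^sub>R Lop x)^n /\<^sub>R fact n) y)"
    unfolding exp_def
    by (rule bounded_linear.suminf[OF app.bounded_linear_left summable_exp_generic])
  also have "\<dots> = op_exp (\<lambda>v. c *\<^sub>R ad br x v) y"
    unfolding op_exp_def fneq
    by (intro suminf_cong) (metis app.scaleR_left app_power inverse_eq_divide)
  finally show ?thesis by simp
qed

end


lemma exp_mult_add: "exp (a *\<^sub>R L) * exp (b *\<^sub>R (L::'a::euclidean_space endo)) = exp ((a + b) *\<^sub>R L)"
  by (subst exp_add_commuting[symmetric]) (auto simp: scaleR_left_distrib)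

lemma exp_neg_cancel: "app (exp ((-s) *\<^sub>R L)) (app (exp (s *\<^sub>R L)) w) = w"
  by (simp add: app_mult[symmetric] exp_mult_add[of "-s" L s, simplified] exp_mult_add[of s L "-s", simplified] del: app_mult)

lemma exp_neg_cancel': "app (exp (s *\<^sub>R L)) (app (exp ((-s) *\<^sub>R L)) w) = w"
  by (simp add: app_mult[symmetric] exp_mult_add[of "-s" L s, simplified] exp_mult_add[of s L "-s", simplified] del: app_mult)

lemma app_exp_L: "app (exp (t *\<^sub>R L)) (app L w) = app L (app (exp (t *\<^sub>R L)) w)"
  by (simp add: app_mult[symmetric] exp_times_scaleR_commute del: app_mult)

lemma deriv_expapp:
  assumes "(v has_vector_derivative v') (at t within T)"
  shows "((\<lambda>t. app (exp (t *\<^sub>R L)) (v t)) has_vector_derivative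
            app (exp (t *\<^sub>R L)) (app L (v t) + v')) (at t within T)"
  using app.has_vector_derivative[OF exp_scaleR_has_vector_derivative_right assms, of L]
  by (simp add: app.add_right add.commute)

lemma cont_exp: "continuous_on S (\<lambda>t. exp (t *\<^sub>R (L::'a::euclidean_space endo)))"
  by (intro continuous_at_imp_continuous_on ballI has_vector_derivative_continuous[OF exp_scaleR_has_vector_derivative_right])

lemma cont_expapp: "continuous_on S g \<Longrightarrow> continuous_on S (\<lambda>t. app (exp (t *\<^sub>R L)) (g t))"
  by (rule app.continuous_on[OF cont_exp])

lemma norm_expapp:
  assumes "\<bar>t\<bar> \<le> 1"
  shows "norm (app (exp (t *\<^sub>R L)) w) \<le> exp (norm L) * norm w"
proof -
  have "norm (app (exp (t *\<^sub>R L)) w) \<le> norm (exp (t *\<^sub>R L)) * norm w" by (rule app_norm)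
  also have "\<dots> \<le> exp (norm (t *\<^sub>R L)) * norm w"
    by (intro mult_right_mono norm_exp) auto
  also have "\<dots> \<le> exp (norm L) * norm w"
    using assms by (intro mult_right_mono) (auto simp: mult_left_le_one_le)
  finally show ?thesis .
qed

definition Vc :: "'a::euclidean_space endo \<Rightarrow> (real \<Rightarrow> 'a) \<Rightarrow> real \<Rightarrow> 'a" where
  "Vc L g s = app (exp ((-s) *\<^sub>R L)) (integral {0..s} (\<lambda>r. app (exp (r *\<^sub>R L)) (g r)))"

lemma Vc_0[simp]: "Vc L g 0 = 0"
  by (simp add: Vc_def app.zero_right)

lemma Vc_deriv:
  assumes g: "continuous_on {0..1} g" and s: "s \<in> {0..1}"
  shows "(Vc L g has_vector_derivative (g s - app L (Vc L g s))) (at s within {0..1})"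
proof -
  let ?F = "\<lambda>r. app (exp (r *\<^sub>R L)) (g r)"
  have Y: "((\<lambda>u. integral {0..u} ?F) has_vector_derivative ?F s) (at s within {0..1})"
    by (rule integral_has_vector_derivative[OF cont_expapp[OF g] s])
  have eq: "Vc L g = (\<lambda>s. app (exp (s *\<^sub>R (-L))) (integral {0..s} ?F))"
    by (auto simp: Vc_def)
  have "(Vc L g has_vector_derivative app (exp (s *\<^sub>R (-L))) (app (-L) (integral {0..s} ?F) + ?F s))
     (at s within {0..1})"
    unfolding eq by (rule deriv_expapp[OF Y])
  moreover have "app (exp (s *\<^sub>R (-L))) (app (-L) (integral {0..s} ?F) + ?F s) = g s - app L (Vc L g s)"
    using app_exp_L[of s "-L"] exp_neg_cancel[of s L]
    by (simp add: Vc_def app.add_right app.diff_right app.minus_left app.minus_right)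
  ultimately show ?thesis by simp
qed

lemma zero_deriv_const:
  fixes Y :: "real \<Rightarrow> 'a::banach"
  assumes "\<And>s. s \<in> {0..1} \<Longrightarrow> (Y has_vector_derivative 0) (at s within {0..1})"
    and "s \<in> {0..1}"
  shows "Y s = Y 0"
proof -
  have "((\<lambda>_. 0) has_integral (Y s - Y 0)) {0..s}"
    apply (rule fundamental_theorem_of_calculus)
    using assms(2) apply simp
    using assms by (auto intro: has_vector_derivative_within_subset[OF assms(1)])
  then show ?thesis
    using has_integral_unique[OF _ has_integral_0] by fastforce
qed

lemma Vc_unique:
  assumes g: "continuous_on {0..1} g" and D0: "D 0 = 0"
    and D: "\<And>s. s \<in> {0..1} \<Longrightarrow> (D has_vector_derivative (g s - app L (D s))) (at s within {0..1})"
    and s: "s \<in> {0..1}"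
  shows "D s = Vc L g s"
proof -
  define Z where "Z s = D s - Vc L g s" for s
  define Y where "Y s = app (exp (s *\<^sub>R L)) (Z s)" for s
  have "(Y has_vector_derivative 0) (at s within {0..1})" if "s \<in> {0..1}" for s
  proof -
    have "(Z has_vector_derivative (- app L (Z s))) (at s within {0..1})"
      unfolding Z_def using has_vector_derivative_diff[OF D[OF that] Vc_deriv[OF g that, of L]]
      by (simp add: app.diff_right algebra_simps)
    from deriv_expapp[OF this, of L] show ?thesis
      unfolding Y_def by (simp add: app.zero_right)
  qed
  then have "Y s = Y 0" using s zero_deriv_const by blast
  also have "Y 0 = 0" by (simp add: Y_def Z_def D0)
  finally have "Z s = 0" using exp_neg_cancel[of s L "Z s"] by (simp add: Y_def app.zero_right)
  then show ?thesis by (simp add: Z_def)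
qed

lemma Vc_bound:
  assumes g: "continuous_on {0..1} g" and s: "s \<in> {0..1}" and B: "\<And>r. r \<in> {0..1} \<Longrightarrow> norm (g r) \<le> B"
  shows "norm (Vc L g s) \<le> exp (norm L) * (exp (norm L) * B)"
proof -
  let ?F = "\<lambda>r. app (exp (r *\<^sub>R L)) (g r)"
  have B0: "0 \<le> B" using B[of 0] by (meson atLeastAtMost_iff norm_ge_zero order_trans zero_le_one order_refl)
  have int: "(?F has_integral integral {0..s} ?F) {0..s}"
    using s by (auto intro!: integrable_continuous_interval cont_expapp continuous_on_subset[OF g])
  have "norm (integral {0..s} ?F) \<le> (exp (norm L) * B) * (s - 0)"
  proof -
    have "norm (app (exp (x *\<^sub>R L)) (g x)) \<le> exp (norm L) * B" if "x \<in> {0..s}" for x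
      using that s by (intro order_trans[OF norm_expapp] mult_left_mono B) auto
    then show ?thesis
      using has_integral_bound_real[OF _ _ int, of "exp (norm L) * B" "{}"] s B0 by auto
  qed
  also have "\<dots> \<le> exp (norm L) * B" using s B0 by (auto intro: mult_left_le)
  finally have "norm (integral {0..s} ?F) \<le> exp (norm L) * B" .
  then show ?thesis unfolding Vc_def
    using s by (intro order_trans[OF norm_expapp] mult_left_mono) auto
qed

lemma Vc_diff:
  assumes "continuous_on {0..1} g1" "continuous_on {0..1} g2" "s \<in> {0..1}"
  shows "Vc L (\<lambda>r. g1 r - g2 r) s = Vc L g1 s - Vc L g2 s"
proof -
  have "continuous_on {0..s} g1" "continuous_on {0..s} g2"
    using assms by (auto intro: continuous_on_subset)
  then have "integral {0..s} (\<lambda>r. app (exp (r *\<^sub>R L)) (g1 r - g2 r)) =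
     integral {0..s} (\<lambda>r. app (exp (r *\<^sub>R L)) (g1 r)) - integral {0..s} (\<lambda>r. app (exp (r *\<^sub>R L)) (g2 r))"
    unfolding app.diff_right
    by (intro integral_diff integrable_continuous_interval cont_expapp)
  then show ?thesis
    unfolding Vc_def by (simp add: app.diff_right)
qed



lemma Vc_cont: "continuous_on {0..1} g \<Longrightarrow> continuous_on {0..1} (Vc L g)"
  using Vc_deriv has_vector_derivative_continuous continuous_on_eq_continuous_within by blast

lemma Vc_add:
  assumes "continuous_on {0..1} g1" "continuous_on {0..1} g2" "s \<in> {0..1}"
  shows "Vc L (\<lambda>r. g1 r + g2 r) s = Vc L g1 s + Vc L g2 s"
proof -
  have "continuous_on {0..s} g1" "continuous_on {0..s} g2"
    using assms by (auto intro: continuous_on_subset)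
  then have "integral {0..s} (\<lambda>r. app (exp (r *\<^sub>R L)) (g1 r + g2 r)) =
     integral {0..s} (\<lambda>r. app (exp (r *\<^sub>R L)) (g1 r)) + integral {0..s} (\<lambda>r. app (exp (r *\<^sub>R L)) (g2 r))"
    unfolding app.add_right
    by (intro integral_add integrable_continuous_interval cont_expapp)
  then show ?thesis
    unfolding Vc_def by (simp add: app.add_right)
qed

lemma Vc_scale:
  shows "Vc L (\<lambda>r. c *\<^sub>R g r) s = c *\<^sub>R Vc L g s"
  unfolding Vc_def app.scaleR_right integral_scaleR_right by (simp add: app.scaleR_right)

lemma W_char:
  assumes s: "s \<in> {0..1}"
  shows "integral {0..s} (\<lambda>t. app (exp ((-t) *\<^sub>R L)) z) = Vc L (\<lambda>_. z) s"
proof (rule Vc_unique[OF _ _ _ s])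
  let ?G = "\<lambda>t. app (exp ((-t) *\<^sub>R L)) z"
  have Gc: "continuous_on {0..1} ?G"
    using cont_expapp[of UNIV "\<lambda>_. z" "-L"] by (auto intro: continuous_on_subset)
  fix s :: real assume s: "s \<in> {0..1}"
  have d1: "((\<lambda>u. integral {0..u} ?G) has_vector_derivative ?G s) (at s within {0..1})"
    by (rule integral_has_vector_derivative[OF Gc s])
  define Q where "Q u = ?G u + app L (integral {0..u} ?G)" for u
  have "(Q has_vector_derivative 0) (at u within {0..1})" if u: "u \<in> {0..1}" for u
  proof -
    have a: "((\<lambda>t. app (exp (t *\<^sub>R (-L))) z) has_vector_derivative
            app (exp (u *\<^sub>R (-L))) (app (-L) z + 0)) (at u within {0..1})"
      by (rule deriv_expapp) simp
    have b: "((\<lambda>t. app L (integral {0..t} ?G)) has_vector_derivative app L (?G u)) (at u within {0..1})"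
      by (rule bounded_linear.has_vector_derivative[OF app.bounded_linear_right
            integral_has_vector_derivative[OF Gc u]])
    show ?thesis unfolding Q_def
      using has_vector_derivative_add[OF a b] app_exp_L[of u "-L" z]
      by (simp add: app.minus_left app.minus_right)
  qed
  then have "Q s = Q 0" using zero_deriv_const s by blast
  then have "?G s = z - app L (integral {0..s} ?G)"
    by (simp add: Q_def app.zero_right algebra_simps)
  with d1 show "((\<lambda>u. integral {0..u} ?G) has_vector_derivative z - app L (integral {0..s} ?G))
      (at s within {0..1})" by simp
qed simp_all

context prelie
begin

lemma phi_integrand: "op_exp (\<lambda>v. - (r *\<^sub>R ad br x v)) z = app (exp ((-r) *\<^sub>R Lop x)) z"
proof -
  have "(\<lambda>v. - (r *\<^sub>R ad br x v)) = (\<lambda>v. (-r) *\<^sub>R ad br x v)" by simp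
  then show ?thesis using op_exp_eq[of "-r" x z] by simp
qed

lemma phi_alt: "phi br x z = integral {0..1} (\<lambda>r. app (exp ((-r) *\<^sub>R Lop x)) z)"
  unfolding phi_def phi_integrand ..

definition W where "W x z s = Vc (Lop x) (\<lambda>_. z) s"

lemma phi_W: "phi br x z = W x z 1"
proof -
  have "phi br x z = integral {0..1} (\<lambda>t. app (exp ((-t) *\<^sub>R Lop x)) z)"
    by (rule phi_alt)
  also have "\<dots> = W x z 1" unfolding W_def by (rule W_char) simp
  finally show ?thesis .
qed

lemma W_deriv: "s \<in> {0..1} \<Longrightarrow> (W x z has_vector_derivative (z - br x (W x z s))) (at s within {0..1})"
  unfolding W_def using Vc_deriv[of "\<lambda>_. z" s "Lop x"] by simp

lemma W_cont: "continuous_on {0..1} (W x z)"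
  unfolding W_def by (rule Vc_cont) simp

lemma W_bound: "s \<in> {0..1} \<Longrightarrow> norm (W x z s) \<le> exp (norm (Lop x)) * (exp (norm (Lop x)) * norm z)"
  unfolding W_def by (rule Vc_bound) auto

lemma W_0[simp]: "W x z 0 = 0" unfolding W_def by simp

lemma phi_scaled:
  assumes t: "t \<in> {0..1}"
  shows "phi br (t *\<^sub>R x) (t *\<^sub>R y) = W x y t"
proof (cases "t = 0")
  case True
  then show ?thesis by (simp add: phi_W W_def Vc_def app.zero_right)
next
  case False
  then have tpos: "t > 0" using t by auto
  let ?G = "\<lambda>r. app (exp ((-r) *\<^sub>R Lop x)) y"
  have Gc: "continuous_on {0..t} ?G"
    using cont_expapp[of UNIV "\<lambda>_. y" "-Lop x"] by (auto intro: continuous_on_subset)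
  have "(?G has_integral integral {0..t} ?G) (cbox 0 t)"
    using integrable_continuous_interval[OF Gc] by (simp add: has_integral_integral)
  from has_integral_affinity'[OF this tpos, of 0]
  have "((\<lambda>r. ?G (t * r)) has_integral (integral {0..t} ?G /\<^sub>R t)) {0..1}"
    using tpos by simp
  from has_integral_cmul[OF this, of t]
  have "((\<lambda>r. t *\<^sub>R ?G (t * r)) has_integral integral {0..t} ?G) {0..1}"
    using tpos by simp
  moreover have "phi br (t *\<^sub>R x) (t *\<^sub>R y) = integral {0..1} (\<lambda>r. t *\<^sub>R ?G (t * r))"
    unfolding phi_alt
  proof (rule integral_cong)
    fix r
    have "(-r) *\<^sub>R Lop (t *\<^sub>R x) = (-(t * r)) *\<^sub>R Lop x" by (simp add: Lop_scale)
    then show "app (exp ((-r) *\<^sub>R Lop (t *\<^sub>R x))) (t *\<^sub>R y) = t *\<^sub>R ?G (t * r)"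
      by (simp add: app.scaleR_right)
  qed
  moreover have "integral {0..t} ?G = W x y t" unfolding W_def by (rule W_char) (use t in auto)
  ultimately show ?thesis by (metis integral_unique)
qed

end


context prelie
begin

definition T where "T x0 z h = Vc (Lop x0) (\<lambda>r. - br h (W x0 z r)) 1"

lemma cont_brW: "continuous_on {0..1} (\<lambda>r. br h (W x z r))"
  by (intro br.continuous_on continuous_on_const W_cont)

lemma W_as_Vc:
  assumes s: "s \<in> {0..1}"
  shows "W x z s = Vc (Lop x0) (\<lambda>r. z - br (x - x0) (W x z r)) s"
proof (rule Vc_unique[OF _ _ _ s])
  show "continuous_on {0..1} (\<lambda>r. z - br (x - x0) (W x z r))"
    by (intro continuous_intros cont_brW)
  fix s :: real assume "s \<in> {0..1}"
  from W_deriv[OF this, of x z]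
  show "(W x z has_vector_derivative z - br (x - x0) (W x z s) - app (Lop x0) (W x z s)) (at s within {0..1})"
    by (simp add: br.diff_left algebra_simps)
qed simp

lemma W_diff:
  assumes s: "s \<in> {0..1}"
  shows "W x z s - W x0 z s = Vc (Lop x0) (\<lambda>r. - br (x - x0) (W x z r)) s"
proof -
  have "W x z s - W x0 z s = Vc (Lop x0) (\<lambda>r. (z - br (x - x0) (W x z r)) - z) s"
  proof -
    have e1: "W x z s = Vc (Lop x0) (\<lambda>r. z - br (x - x0) (W x z r)) s" by (rule W_as_Vc[OF s])
    have e0: "W x0 z s = Vc (Lop x0) (\<lambda>r. z) s" by (simp add: W_def)
    show ?thesis
      unfolding e0 apply (subst e1)
      by (rule Vc_diff[symmetric]) (use s in \<open>auto intro!: continuous_intros cont_brW\<close>)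
  qed
  then show ?thesis by simp
qed

lemma T_rem:
  "W x z 1 - W x0 z 1 - T x0 z (x - x0) = Vc (Lop x0) (\<lambda>r. - br (x - x0) (W x z r - W x0 z r)) 1"
proof -
  have "W x z 1 - W x0 z 1 - T x0 z (x - x0) =
      Vc (Lop x0) (\<lambda>r. (- br (x - x0) (W x z r)) - (- br (x - x0) (W x0 z r))) 1"
    unfolding W_diff[of 1, simplified] T_def
    by (rule Vc_diff[symmetric]) (auto intro!: continuous_intros cont_brW)
  then show ?thesis by (simp add: br.diff_right)
qed

lemma T_linear: "linear (T x0 z)"
proof (rule linearI)
  fix h1 h2
  show "T x0 z (h1 + h2) = T x0 z h1 + T x0 z h2"
    unfolding T_def
    by (subst Vc_add[symmetric]) (auto intro!: continuous_intros cont_brW simp: br.add_left)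
next
  fix c h
  show "T x0 z (c *\<^sub>R h) = c *\<^sub>R T x0 z h"
    unfolding T_def by (subst Vc_scale[symmetric]) (simp add: br.scaleR_left)
qed

lemma br_neg_bound: "norm (- br h w) \<le> norm h * norm w * K"
  using K(2) by simp

lemma W_diff_bound:
  assumes s: "s \<in> {0..1}" and h: "norm (x - x0) < 1"
  shows "norm (W x z s - W x0 z s) \<le>
     exp (norm (Lop x0)) * (exp (norm (Lop x0)) * (norm (x - x0) *
        (exp (K * (norm x0 + 1)) * (exp (K * (norm x0 + 1)) * norm z)) * K))"
proof -
  have nx: "exp (norm (Lop x)) \<le> exp (K * (norm x0 + 1))"
  proof -
    have "norm x \<le> norm x0 + 1" using h norm_triangle_sub[of x x0] by (simp add: norm_minus_commute)
    then have "K * norm x \<le> K * (norm x0 + 1)" using K(1) by simp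
    then show ?thesis using norm_Lop[of x] by simp
  qed
  have Wb: "norm (W x z r) \<le> exp (K * (norm x0 + 1)) * (exp (K * (norm x0 + 1)) * norm z)"
    if "r \<in> {0..1}" for r
  proof -
    have "exp (norm (Lop x)) * (exp (norm (Lop x)) * norm z) \<le> exp (K * (norm x0 + 1)) * (exp (K * (norm x0 + 1)) * norm z)"
      using nx by (intro mult_mono) (auto intro: mult_right_mono)
    then show ?thesis using W_bound[OF that, of x z] by linarith
  qed
  show ?thesis
    unfolding W_diff[OF s]
  proof (rule Vc_bound[OF _ s])
    show "continuous_on {0..1} (\<lambda>r. - br (x - x0) (W x z r))"
      by (intro continuous_intros cont_brW)
    fix r :: real assume r: "r \<in> {0..1}"
    show "norm (- br (x - x0) (W x z r)) \<le>
        norm (x - x0) * (exp (K * (norm x0 + 1)) * (exp (K * (norm x0 + 1)) * norm z)) * K"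
    proof -
      have "norm (x - x0) * norm (W x z r) * K \<le>
          norm (x - x0) * (exp (K * (norm x0 + 1)) * (exp (K * (norm x0 + 1)) * norm z)) * K"
        using Wb[OF r] K(1) by (intro mult_right_mono mult_left_mono) auto
      then show ?thesis using br_neg_bound[of "x - x0" "W x z r"] by linarith
    qed
  qed
qed

lemma phi_has_derivative: "((\<lambda>x. phi br x z) has_derivative T x0 z) (at x0)"
proof -
  define c0 where "c0 = exp (norm (Lop x0))"
  define cM where "cM = exp (K * (norm x0 + 1))"
  define C1 where "C1 = c0 * c0 * cM * cM * norm z * K"
  define C where "C = c0 * c0 * C1 * K + 1"
  have c0: "c0 > 0" and cM: "cM > 0" by (auto simp: c0_def cM_def)
  have C1: "C1 \<ge> 0" using c0 cM K(1) by (simp add: C1_def)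
  have "c0 * c0 * C1 * K \<ge> 0" using c0 C1 K(1) by simp
  then have C: "C > 0" by (simp add: C_def)
  have rem: "norm (phi br x z - phi br x0 z - T x0 z (x - x0)) \<le> C * norm (x - x0) * norm (x - x0)"
    if h: "norm (x - x0) < 1" for x
  proof -
    have Db: "norm (W x z r - W x0 z r) \<le> C1 * norm (x - x0)" if "r \<in> {0..1}" for r
      using W_diff_bound[OF that h, of z] by (simp add: C1_def c0_def cM_def mult_ac)
    have "norm (phi br x z - phi br x0 z - T x0 z (x - x0)) \<le>
        c0 * (c0 * (norm (x - x0) * (C1 * norm (x - x0)) * K))"
      unfolding phi_W T_rem c0_def
    proof (rule Vc_bound)
      show "continuous_on {0..1} (\<lambda>r. - br (x - x0) (W x z r - W x0 z r))"
        by (intro continuous_intros br.continuous_on continuous_on_const W_cont)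
      fix r :: real assume r: "r \<in> {0..1}"
      show "norm (- br (x - x0) (W x z r - W x0 z r)) \<le> norm (x - x0) * (C1 * norm (x - x0)) * K"
      proof -
        have "norm (x - x0) * norm (W x z r - W x0 z r) * K \<le> norm (x - x0) * (C1 * norm (x - x0)) * K"
          using Db[OF r] K(1) by (intro mult_right_mono mult_left_mono) auto
        then show ?thesis using br_neg_bound[of "x - x0" "W x z r - W x0 z r"] by linarith
      qed
    qed simp
    also have "\<dots> \<le> C * norm (x - x0) * norm (x - x0)"
      using c0 C1 K(1) by (simp add: C_def algebra_simps)
    finally show ?thesis .
  qed
  show ?thesis
    unfolding has_derivative_at_alt
  proof (intro conjI allI impI)
    show "bounded_linear (T x0 z)" using T_linear linear_conv_bounded_linear by blast
    fix e :: real assume e: "e > 0"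
    show "\<exists>d>0. \<forall>y. norm (y - x0) < d \<longrightarrow>
        norm (phi br y z - phi br x0 z - T x0 z (y - x0)) \<le> e * norm (y - x0)"
    proof (intro exI[of _ "min 1 (e / C)"] conjI allI impI)
      show "0 < min 1 (e / C)" using e C by simp
      fix y assume y: "norm (y - x0) < min 1 (e / C)"
      then have "C * norm (y - x0) \<le> e" using C by (simp add: field_simps)
      then have "C * norm (y - x0) * norm (y - x0) \<le> e * norm (y - x0)"
        by (simp add: mult_right_mono)
      then show "norm (phi br y z - phi br x0 z - T x0 z (y - x0)) \<le> e * norm (y - x0)"
        using rem[of y] y by simp
    qed
  qed
qed

lemma frechet_phi: "frechet_derivative (\<lambda>x. phi br x z) (at x0) = T x0 z"
  using frechet_derivative_at[OF phi_has_derivative] by simp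

end


context prelie
begin

lemma MC_eq: "MC br (phi br) x y z = T x z y - T x y z + br (phi br x y) (phi br x z)"
proof -
  have "brk11 br (phi br) (phi br) x y z = 2 *\<^sub>R br (phi br x y) (phi br x z)"
    unfolding brk11_def using antisym[of "phi br x z" "phi br x y"] by (simp add: scaleR_2)
  then show ?thesis unfolding MC_def dR1_def frechet_phi by simp
qed

lemma claim3_Vc:
  "MC br (phi br) x y z = Vc (Lop x) (\<lambda>s. - Jac br x (W x y s) (W x z s)) 1"
proof -
  define a where "a = W x y"
  define b where "b = W x z"
  define P where "P = Vc (Lop x) (\<lambda>r. - br y (b r))"
  define Q where "Q = Vc (Lop x) (\<lambda>r. - br z (a r))"
  define M where "M s = P s - Q s + br (a s) (b s)" for s
  have ca: "continuous_on {0..1} a" and cb: "continuous_on {0..1} b"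
    unfolding a_def b_def by (rule W_cont)+
  have "M s = Vc (Lop x) (\<lambda>s. - Jac br x (a s) (b s)) s" if s: "s \<in> {0..1}" for s
  proof (rule Vc_unique[OF _ _ _ s])
    show "continuous_on {0..1} (\<lambda>s. - Jac br x (a s) (b s))"
      unfolding Jac_def
      by (intro continuous_intros br.continuous_on continuous_on_const ca cb)
    show "M 0 = 0"
      by (simp add: M_def P_def Q_def a_def b_def br.zero_left)
    fix s :: real assume s: "s \<in> {0..1}"
    have da: "(a has_vector_derivative (y - br x (a s))) (at s within {0..1})"
      unfolding a_def by (rule W_deriv[OF s])
    have db: "(b has_vector_derivative (z - br x (b s))) (at s within {0..1})"
      unfolding b_def by (rule W_deriv[OF s])
    have dP: "(P has_vector_derivative (- br y (b s) - br x (P s))) (at s within {0..1})"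
      unfolding P_def using Vc_deriv[OF _ s, of "\<lambda>r. - br y (b r)" "Lop x"]
      by (simp add: continuous_intros br.continuous_on continuous_on_const cb)
    have dQ: "(Q has_vector_derivative (- br z (a s) - br x (Q s))) (at s within {0..1})"
      unfolding Q_def using Vc_deriv[OF _ s, of "\<lambda>r. - br z (a r)" "Lop x"]
      by (simp add: continuous_intros br.continuous_on continuous_on_const ca)
    have dab: "((\<lambda>s. br (a s) (b s)) has_vector_derivative
        (br (a s) (z - br x (b s)) + br (y - br x (a s)) (b s))) (at s within {0..1})"
      by (rule br.has_vector_derivative[OF da db])
    have dM: "(M has_vector_derivative
        ((- br y (b s) - br x (P s)) - (- br z (a s) - br x (Q s))
          + (br (a s) (z - br x (b s)) + br (y - br x (a s)) (b s)))) (at s within {0..1})"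
      unfolding M_def[abs_def]
      by (intro has_vector_derivative_add has_vector_derivative_diff dP dQ dab)
    have h1: "br z (a s) = - br (a s) z" by (rule antisym)
    have h2: "br (br (a s) (b s)) x = - br x (br (a s) (b s))" by (rule antisym)
    have h3: "br (a s) (br x (b s)) = - br (br x (b s)) (a s)" by (rule antisym)
    have h4: "br (b s) x = - br x (b s)" by (rule antisym)
    have "(- br y (b s) - br x (P s)) - (- br z (a s) - br x (Q s))
          + (br (a s) (z - br x (b s)) + br (y - br x (a s)) (b s))
        = - Jac br x (a s) (b s) - app (Lop x) (M s)"
      unfolding Jac_def M_def app_Lop
      by (simp add: h1 h2 h3 h4 br.diff_left br.diff_right br.add_right br.minus_left algebra_simps)
    with dM show "(M has_vector_derivative - Jac br x (a s) (b s) - app (Lop x) (M s)) (at s within {0..1})"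
      by simp
  qed
  from this[of 1] have "M 1 = Vc (Lop x) (\<lambda>s. - Jac br x (a s) (b s)) 1" by simp
  moreover have "MC br (phi br) x y z = M 1"
    unfolding MC_eq M_def P_def Q_def T_def a_def b_def phi_W ..
  ultimately show ?thesis by (simp add: a_def b_def)
qed

lemma claim3:
  "MC br (phi br) x y z
    = - integral {0..1} (\<lambda>t::real. op_exp (\<lambda>v. (t - 1) *\<^sub>R ad br x v)
             (Jac br x (phi br (t *\<^sub>R x) (t *\<^sub>R y)) (phi br (t *\<^sub>R x) (t *\<^sub>R z))))"
proof -
  let ?J = "\<lambda>s. Jac br x (W x y s) (W x z s)"
  let ?F = "\<lambda>r. app (exp (r *\<^sub>R Lop x)) (- ?J r)"
  have cJ: "continuous_on {0..1} ?J"
    unfolding Jac_def by (intro continuous_intros br.continuous_on continuous_on_const W_cont)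
  have int: "?F integrable_on {0..1}"
    by (intro integrable_continuous_interval cont_expapp continuous_intros cJ)
  have "MC br (phi br) x y z = app (exp ((-1) *\<^sub>R Lop x)) (integral {0..1} ?F)"
    unfolding claim3_Vc Vc_def by simp
  also have "\<dots> = integral {0..1} (app (exp ((-1) *\<^sub>R Lop x)) \<circ> ?F)"
    by (rule integral_linear[OF int app.bounded_linear_right, symmetric])
  also have "\<dots> = integral {0..1} (\<lambda>t. - app (exp ((t - 1) *\<^sub>R Lop x)) (?J t))"
  proof (rule integral_cong)
    fix t :: real
    have "app (exp ((-1) *\<^sub>R Lop x)) (?F t) = app (exp ((-1) *\<^sub>R Lop x) * exp (t *\<^sub>R Lop x)) (- ?J t)"
      by simp
    also have "\<dots> = - app (exp ((t - 1) *\<^sub>R Lop x)) (?J t)"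
      by (simp only: exp_mult_add app.minus_right) simp
    finally show "(app (exp ((-1) *\<^sub>R Lop x)) \<circ> ?F) t = - app (exp ((t - 1) *\<^sub>R Lop x)) (?J t)"
      by simp
  qed
  also have "\<dots> = - integral {0..1} (\<lambda>t. app (exp ((t - 1) *\<^sub>R Lop x)) (?J t))"
    by (rule integral_neg)
  also have "integral {0..1} (\<lambda>t. app (exp ((t - 1) *\<^sub>R Lop x)) (?J t)) =
      integral {0..1} (\<lambda>t::real. op_exp (\<lambda>v. (t - 1) *\<^sub>R ad br x v)
             (Jac br x (phi br (t *\<^sub>R x) (t *\<^sub>R y)) (phi br (t *\<^sub>R x) (t *\<^sub>R z))))"
    by (rule integral_cong) (simp add: op_exp_eq phi_scaled)
  finally show ?thesis .
qed

end


context prelie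
begin

lemma phi_scaleR2: "phi br w (c *\<^sub>R y) = c *\<^sub>R phi br w y"
  unfolding phi_alt app.scaleR_right integral_cmul ..

lemma phi_zero: "phi br 0 y = y"
  unfolding phi_alt by (simp add: Lop_zero)

lemma Jac_scale1: "Jac br (t *\<^sub>R x) u v = t *\<^sub>R Jac br x u v"
  unfolding Jac_def by (simp add: br.scaleR_left br.scaleR_right scaleR_right_distrib)

lemma Jac_scale23: "Jac br x (s *\<^sub>R u) (s *\<^sub>R v) = (s * s) *\<^sub>R Jac br x u v"
  unfolding Jac_def by (simp add: br.scaleR_left br.scaleR_right scaleR_right_distrib)

lemma cont_phi: "continuous_on S f \<Longrightarrow> continuous_on S (\<lambda>p. phi br (f p) y)"
proof -
  assume f: "continuous_on S f"
  have "continuous_on UNIV (\<lambda>x. phi br x y)"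
    using phi_has_derivative has_derivative_continuous continuous_at_imp_continuous_on by blast
  from continuous_on_compose2[OF this f] show ?thesis by simp
qed

lemma cont_exp_comp: "continuous_on S c \<Longrightarrow> continuous_on S (\<lambda>p. exp (c p *\<^sub>R (L::'a endo)))"
  using continuous_on_compose2[OF cont_exp[of UNIV L]] by simp

definition fF where
  "fF x y z t s = app (exp (((s - 1) * t) *\<^sub>R Lop x))
      (Jac br x (s *\<^sub>R phi br ((s * t) *\<^sub>R x) y) (s *\<^sub>R phi br ((s * t) *\<^sub>R x) z))"

lemma MC_tF: "MC br (phi br) (t *\<^sub>R x) y z = t *\<^sub>R (- integral {0..1} (fF x y z t))"
proof -
  have "MC br (phi br) (t *\<^sub>R x) y z = - integral {0..1} (\<lambda>s. t *\<^sub>R fF x y z t s)"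
    unfolding claim3
  proof (rule arg_cong[where f=uminus], rule integral_cong)
    fix s :: real
    have e1: "(s - 1) *\<^sub>R Lop (t *\<^sub>R x) = ((s - 1) * t) *\<^sub>R Lop x" by (simp add: Lop_scale)
    show "op_exp (\<lambda>v. (s - 1) *\<^sub>R ad br (t *\<^sub>R x) v)
          (Jac br (t *\<^sub>R x) (phi br (s *\<^sub>R t *\<^sub>R x) (s *\<^sub>R y)) (phi br (s *\<^sub>R t *\<^sub>R x) (s *\<^sub>R z)))
        = t *\<^sub>R fF x y z t s"
      unfolding op_exp_eq e1 fF_def Jac_scale1 phi_scaleR2 app.scaleR_right
      by simp
  qed
  then show ?thesis by simp
qed

lemma F_cont: "continuous_on UNIV (\<lambda>t. - integral {0..1} (fF x y z t))"
proof -
  have "continuous_on (UNIV \<times> cbox 0 1) (\<lambda>(t, s). fF x y z t s)"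
    unfolding fF_def Jac_def split_beta
    by (intro app.continuous_on cont_exp_comp br.continuous_on continuous_intros cont_phi)
  from integral_continuous_on_param[OF this] show ?thesis
    by (intro continuous_intros) simp
qed

lemma F0: "- integral {0..1} (fF x y z 0) = (- (1/3)) *\<^sub>R Jac br x y z"
proof -
  have "fF x y z 0 = (\<lambda>s. (s * s) *\<^sub>R Jac br x y z)"
    by (auto simp: fF_def phi_zero Jac_scale23)
  moreover have "((\<lambda>s::real. s * s) has_integral (1/3)) {0..1}"
  proof -
    have "((\<lambda>s::real. s * s) has_integral (1 ^ 3 / 3 - 0 ^ 3 / 3)) {0..1}"
    proof (rule fundamental_theorem_of_calculus)
      fix s :: real
      have "((\<lambda>s::real. s ^ 3 / 3) has_real_derivative s * s) (at s within {0..1})"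
        by (auto intro!: derivative_eq_intros simp: power2_eq_square)
      then show "((\<lambda>s::real. s ^ 3 / 3) has_vector_derivative s * s) (at s within {0..1})"
        by (simp add: has_real_derivative_iff_has_vector_derivative)
    qed simp
    then show ?thesis by simp
  qed
  then have "((\<lambda>s. (s * s) *\<^sub>R Jac br x y z) has_integral (1/3) *\<^sub>R Jac br x y z) {0..1}"
    by (rule has_integral_scaleR_left)
  ultimately show ?thesis by (simp add: integral_unique)
qed

lemma claim2: "Jac br x y z = (-3) *\<^sub>R vector_derivative (\<lambda>t. MC br (phi br) (t *\<^sub>R x) y z) (at 0)"
proof -
  define F where "F t = - integral {0..1} (fF x y z t)" for t
  have Fc: "isCont F 0" using F_cont[of x y z] unfolding F_def[abs_def]
    by (simp add: continuous_on_eq_continuous_at)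
  have "((\<lambda>t. t *\<^sub>R F t) has_vector_derivative F 0) (at 0)"
    unfolding has_vector_derivative_def has_derivative_at_alt
  proof (intro conjI allI impI)
    show "bounded_linear (\<lambda>h. h *\<^sub>R F 0)" by (rule bounded_linear_scaleR_left)
    fix e :: real assume e: "e > 0"
    from Fc[unfolded continuous_at_eps_delta] e obtain d where d: "d > 0"
      and dd: "\<And>t. dist t 0 < d \<Longrightarrow> dist (F t) (F 0) < e" by blast
    show "\<exists>d>0. \<forall>t. norm (t - 0) < d \<longrightarrow> norm (t *\<^sub>R F t - 0 *\<^sub>R F 0 - (t - 0) *\<^sub>R F 0) \<le> e * norm (t - 0)"
    proof (intro exI[of _ d] conjI allI impI d)
      fix t :: real assume t: "norm (t - 0) < d"
      have "norm (t *\<^sub>R F t - 0 *\<^sub>R F 0 - (t - 0) *\<^sub>R F 0) = \<bar>t\<bar> * norm (F t - F 0)"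
        by (simp add: scaleR_diff_right[symmetric])
      also have "\<dots> \<le> \<bar>t\<bar> * e"
        using dd[of t] t by (intro mult_left_mono) (auto simp: dist_norm)
      finally show "norm (t *\<^sub>R F t - 0 *\<^sub>R F 0 - (t - 0) *\<^sub>R F 0) \<le> e * norm (t - 0)"
        by (simp add: mult.commute)
    qed
  qed
  moreover have "(\<lambda>t. MC br (phi br) (t *\<^sub>R x) y z) = (\<lambda>t. t *\<^sub>R F t)"
    by (simp add: MC_tF F_def)
  ultimately have "vector_derivative (\<lambda>t. MC br (phi br) (t *\<^sub>R x) y z) (at 0) = F 0"
    using vector_derivative_at by metis
  then show ?thesis using F0[of x y z] by (simp add: F_def)
qed

end

theorem theorem1p2:
  fixes br :: "'a::euclidean_space \<Rightarrow> 'a \<Rightarrow> 'a"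
  assumes bil: "bilinear br"
    and antisym: "\<And>x y. br x y = - br y x"
  shows "((\<forall>x y z. MC br (phi br) x y z = 0) \<longleftrightarrow> (\<forall>x y z. Jac br x y z = 0))
    \<and> (\<forall>x y z. Jac br x y z
          = (-3) *\<^sub>R vector_derivative (\<lambda>t. MC br (phi br) (t *\<^sub>R x) y z) (at 0))
    \<and> (\<forall>x y z. MC br (phi br) x y z
          = - integral {0..1} (\<lambda>t::real. op_exp (\<lambda>v. (t - 1) *\<^sub>R ad br x v)
                 (Jac br x (phi br (t *\<^sub>R x) (t *\<^sub>R y)) (phi br (t *\<^sub>R x) (t *\<^sub>R z)))))"
proof -
  interpret prelie br using assms by unfold_locales
  have c2: "\<forall>x y z. Jac br x y z
          = (-3) *\<^sub>R vector_derivative (\<lambda>t. MC br (phi br) (t *\<^sub>R x) y z) (at 0)"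
    using claim2 by blast
  have c3: "\<forall>x y z. MC br (phi br) x y z
          = - integral {0..1} (\<lambda>t::real. op_exp (\<lambda>v. (t - 1) *\<^sub>R ad br x v)
                 (Jac br x (phi br (t *\<^sub>R x) (t *\<^sub>R y)) (phi br (t *\<^sub>R x) (t *\<^sub>R z))))"
    using claim3 by blast
  have c1: "(\<forall>x y z. MC br (phi br) x y z = 0) \<longleftrightarrow> (\<forall>x y z. Jac br x y z = 0)"
  proof
    assume h: "\<forall>x y z. MC br (phi br) x y z = 0"
    show "\<forall>x y z. Jac br x y z = 0"
    proof (intro allI)
      fix x y z
      have "(\<lambda>t. MC br (phi br) (t *\<^sub>R x) y z) = (\<lambda>t. 0)" using h by simp
      moreover have "vector_derivative (\<lambda>t::real. 0::'a) (at 0) = 0"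
        by (rule vector_derivative_at) (rule has_vector_derivative_const)
      ultimately show "Jac br x y z = 0" using c2 by simp
    qed
  next
    assume h: "\<forall>x y z. Jac br x y z = 0"
    show "\<forall>x y z. MC br (phi br) x y z = 0"
      using c3 h by (simp add: op_exp_eq app.zero_right)
  qed
  show ?thesis using c1 c2 c3 by blast
qed


end
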